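(* Let $\mathcal{G}\subseteq C(\mathbb{R},\mathbb{R})$ be nonempty. The following conditions are equivalent: (1) $\mathcal{K}_\mathcal{G}\subseteq\{\mathrm{CL}(\mathbb{R})\cap\mathcal{P}(X):X\subseteq\mathbb{R}\}$; (2) $\mathcal{G}$ is a complete and connected family.
   Context: Functions are identified with their graphs, so $\bigcup\mathcal{G}\subseteq\mathbb{R}^2$ is the union of graphs. $\mathrm{CL}(\mathbb{R})$ is the family of closed subsets of $\mathbb{R}$ and $\mathcal{P}(X)$ the power set of $X$. A family $\mathcal{G}\subseteq C(\mathbb{R},\mathbb{R})$ is complete if $g\in\mathcal{G}$ for every $g\in C(\mathbb{R},\mathbb{R})$ whose graph is contained in $\bigcup\mathcal{G}$; it is connected if for any $f,g\in\mathcal{G}$ and $x\neq y$ there is $h\in\mathcal{G}$ with $h(x)=f(x)$ and $h(y)=g(y)$. For $\mathcal{G}\subseteq C(\mathbb{R},\mathbb{R})$ let $R_\mathcal{G}=\{(f,E)\in C(\mathbb{R},\mathbb{R})\times\mathrm{CL}(\mathbb{R}):(\exists g\in\mathcal{G})\, f\restriction E=g\restriction E\}$; for $\mathcal{F}\subseteq C(\mathbb{R},\mathbb{R})$ put $E_\mathcal{G}(\mathcal{F})=\{E\in\mathrm{CL}(\mathbb{R}):(\forall f\in\mathcal{F})\,(f,E)\in R_\mathcal{G}\}$, and let $\mathcal{K}_\mathcal{G}=\{E_\mathcal{G}(\mathcal{F}):\mathcal{F}\subseteq C(\mathbb{R},\mathbb{R})\}$. *)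

theory Defs
  imports "HOL-Analysis.Analysis"
begin

definition Cont :: "(real \<Rightarrow> real) set" where
  "Cont = {f. continuous_on UNIV f}"

definition graph_union :: "(real \<Rightarrow> real) set \<Rightarrow> (real \<times> real) set" where
  "graph_union G = (\<Union>g\<in>G. {(x, g x) | x. True})"

definition complete_family :: "(real \<Rightarrow> real) set \<Rightarrow> bool" where
  "complete_family G \<longleftrightarrow>
     (\<forall>g\<in>Cont. {(x, g x) | x. True} \<subseteq> graph_union G \<longrightarrow> g \<in> G)"

definition connected_family :: "(real \<Rightarrow> real) set \<Rightarrow> bool" where
  "connected_family G \<longleftrightarrow>
     (\<forall>f\<in>G. \<forall>g\<in>G. \<forall>x y. x \<noteq> y \<longrightarrow> (\<exists>h\<in>G. h x = f x \<and> h y = g y))"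

definition CL :: "real set set" where
  "CL = {E. closed E}"

definition R_rel :: "(real \<Rightarrow> real) set \<Rightarrow> ((real \<Rightarrow> real) \<times> real set) set" where
  "R_rel G = {(f, E). f \<in> Cont \<and> E \<in> CL \<and> (\<exists>g\<in>G. \<forall>x\<in>E. f x = g x)}"

definition E_fam :: "(real \<Rightarrow> real) set \<Rightarrow> (real \<Rightarrow> real) set \<Rightarrow> real set set" where
  "E_fam G F = {E \<in> CL. \<forall>f\<in>F. (f, E) \<in> R_rel G}"

definition K_fam :: "(real \<Rightarrow> real) set \<Rightarrow> real set set set" where
  "K_fam G = {E_fam G F | F. F \<subseteq> Cont}"

end

theory Submission
  imports Defs
begin


lemma cont_iff: "continuous_on UNIV h \<longleftrightarrow> (\<forall>x. isCont h x)"
  by (simp add: continuous_on_eq_continuous_at)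

lemma isCont_eps: "isCont (h::real\<Rightarrow>real) x \<longleftrightarrow> (\<forall>e>0. \<exists>d>0. \<forall>y. \<bar>y - x\<bar> < d \<longrightarrow> \<bar>h y - h x\<bar> < e)"
  unfolding continuous_at_eps_delta dist_real_def by simp

locale fam =
  fixes G :: "(real \<Rightarrow> real) set"
  assumes sub: "G \<subseteq> Cont" and ne: "G \<noteq> {}" and compl: "complete_family G"
    and conn: "connected_family G"
begin

definition adm :: "(real \<Rightarrow> real) \<Rightarrow> bool" where
  "adm h \<longleftrightarrow> continuous_on UNIV h \<and> (\<forall>x. \<exists>g\<in>G. h x = g x)"

lemma adm_G: "adm h \<Longrightarrow> h \<in> G"
proof -
  assume a: "adm h"
  have "h \<in> Cont" using a by (simp add: adm_def Cont_def)
  moreover have "{(x, h x) | x. True} \<subseteq> graph_union G"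
    using a unfolding adm_def graph_union_def by auto
  ultimately show ?thesis using compl unfolding complete_family_def by blast
qed

lemma G_adm: "g \<in> G \<Longrightarrow> adm g"
  using sub unfolding adm_def Cont_def by auto

lemma G_cont: "g \<in> G \<Longrightarrow> continuous_on UNIV g"
  using sub unfolding Cont_def by auto

definition clamp :: "(real \<Rightarrow> real) \<Rightarrow> (real \<Rightarrow> real) \<Rightarrow> (real \<Rightarrow> real) \<Rightarrow> real \<Rightarrow> real" where
  "clamp L U c = (\<lambda>x. max (min (L x) (U x)) (min (max (L x) (U x)) (c x)))"

lemma clamp_cont: "continuous_on UNIV L \<Longrightarrow> continuous_on UNIV U \<Longrightarrow> continuous_on UNIV c
  \<Longrightarrow> continuous_on UNIV (clamp L U c)"
  unfolding clamp_def by (intro continuous_on_max continuous_on_min) auto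

lemma clamp_val: "clamp L U c x = L x \<or> clamp L U c x = U x \<or> clamp L U c x = c x"
  unfolding clamp_def by linarith

lemma clamp_bnd: "min (L x) (U x) \<le> clamp L U c x \<and> clamp L U c x \<le> max (L x) (U x)"
  unfolding clamp_def by linarith

lemma clamp_L: "c x = L x \<Longrightarrow> clamp L U c x = L x"
  unfolding clamp_def by linarith

lemma clamp_U: "c x = U x \<Longrightarrow> clamp L U c x = U x"
  unfolding clamp_def by linarith

lemma connI: "f \<in> G \<Longrightarrow> g \<in> G \<Longrightarrow> x \<noteq> y \<Longrightarrow> \<exists>h\<in>G. h x = f x \<and> h y = g y"
  using conn unfolding connected_family_def by blast

end


locale sfam = fam +
  fixes f :: "real \<Rightarrow> real" and E :: "real set"
  assumes fC: "continuous_on UNIV f" and cE: "closed E"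
    and pt: "\<forall>x\<in>E. \<exists>g\<in>G. g x = f x"
begin

definition Q :: "real \<Rightarrow> real \<Rightarrow> (real \<Rightarrow> real) set" where
  "Q a b = {k. k \<in> G \<and> k a = f a \<and> k b = f b}"

definition Rs :: "real \<Rightarrow> real \<Rightarrow> real set" where
  "Rs a b = {r. \<exists>k\<in>Q a b. \<forall>y\<in>{a..b}. \<bar>k y - f a\<bar> \<le> r}"

lemma Q_ne: assumes "a \<in> E" "b \<in> E" "a \<noteq> b" shows "\<exists>k. k \<in> Q a b"
proof -
  obtain g1 where g1: "g1 \<in> G" "g1 a = f a" using pt assms by blast
  obtain g2 where g2: "g2 \<in> G" "g2 b = f b" using pt assms by blast
  obtain h where "h \<in> G" "h a = g1 a" "h b = g2 b" using connI[OF g1(1) g2(1) assms(3)] by blast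
  thus ?thesis using g1 g2 unfolding Q_def by auto
qed

lemma K_ex: assumes "a \<in> E" "b \<in> E" "a < b"
  shows "\<exists>k\<in>Q a b. \<forall>r\<in>Rs a b. \<forall>y\<in>{a..b}. \<bar>k y - f a\<bar> \<le> r + (b - a)"
proof -
  obtain k0 where k0: "k0 \<in> Q a b" using Q_ne assms by force
  have "continuous_on {a..b} (\<lambda>y. \<bar>k0 y - f a\<bar>)"
    using k0 G_cont unfolding Q_def
    by (intro continuous_intros) (auto intro: continuous_on_subset)
  then obtain x where "x \<in> {a..b}" "\<forall>y\<in>{a..b}. \<bar>k0 y - f a\<bar> \<le> \<bar>k0 x - f a\<bar>"
    using continuous_attains_sup[of "{a..b}" "\<lambda>y. \<bar>k0 y - f a\<bar>"] assms by auto
  hence ne: "Rs a b \<noteq> {}" using k0 unfolding Rs_def by blast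
  have bd: "bdd_below (Rs a b)"
    unfolding bdd_below_def Rs_def using assms
    by (rule_tac x=0 in exI) (force)
  obtain r1 where r1: "r1 \<in> Rs a b" "r1 < Inf (Rs a b) + (b - a)"
    using cInf_lessD[OF ne, of "Inf (Rs a b) + (b - a)"] assms by auto
  then obtain k where k: "k \<in> Q a b" "\<forall>y\<in>{a..b}. \<bar>k y - f a\<bar> \<le> r1"
    unfolding Rs_def by blast
  have "\<forall>r\<in>Rs a b. \<forall>y\<in>{a..b}. \<bar>k y - f a\<bar> \<le> r + (b - a)"
  proof (intro ballI)
    fix r y assume "r \<in> Rs a b" "y \<in> {a..b}"
    have "Inf (Rs a b) \<le> r" using cInf_lower[OF \<open>r \<in> Rs a b\<close> bd] .
    thus "\<bar>k y - f a\<bar> \<le> r + (b - a)" using k(2) \<open>y \<in> {a..b}\<close> r1(2) by force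
  qed
  thus ?thesis using k(1) by blast
qed

definition Kf :: "real \<Rightarrow> real \<Rightarrow> real \<Rightarrow> real" where
  "Kf a b = (SOME k. k \<in> Q a b \<and> (\<forall>r\<in>Rs a b. \<forall>y\<in>{a..b}. \<bar>k y - f a\<bar> \<le> r + (b - a)))"

lemma Kf: assumes "a \<in> E" "b \<in> E" "a < b"
  shows "Kf a b \<in> G" "Kf a b a = f a" "Kf a b b = f b"
    "\<And>r y. r \<in> Rs a b \<Longrightarrow> y \<in> {a..b} \<Longrightarrow> \<bar>Kf a b y - f a\<bar> \<le> r + (b - a)"
proof -
  have "Kf a b \<in> Q a b \<and> (\<forall>r\<in>Rs a b. \<forall>y\<in>{a..b}. \<bar>Kf a b y - f a\<bar> \<le> r + (b - a))"
    unfolding Kf_def using someI_ex[OF K_ex[OF assms, unfolded Bex_def]] by blast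
  thus "Kf a b \<in> G" "Kf a b a = f a" "Kf a b b = f b"
    "\<And>r y. r \<in> Rs a b \<Longrightarrow> y \<in> {a..b} \<Longrightarrow> \<bar>Kf a b y - f a\<bar> \<le> r + (b - a)"
    unfolding Q_def by auto
qed

end

context sfam begin

lemma pasting:
  fixes k1 g k2 :: "real \<Rightarrow> real" and t1 t2 :: real
  assumes "continuous_on UNIV k1" "continuous_on UNIV g" "continuous_on UNIV k2"
    "t1 \<le> t2" "k1 t1 = g t1" "k2 t2 = g t2"
  shows "continuous_on UNIV (\<lambda>y. if y \<le> t1 then k1 y else if y \<le> t2 then g y else k2 y)"
proof -
  have c2: "continuous_on UNIV (\<lambda>y. if y \<le> t2 then g y else k2 y)"
    using continuous_on_cases_le[of UNIV "\<lambda>y. y" t2 g k2]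
      continuous_on_subset[OF assms(2)] continuous_on_subset[OF assms(3)] assms(6) by auto
  show ?thesis
    using continuous_on_cases_le[of UNIV "\<lambda>y. y" t1 k1 "\<lambda>y. if y \<le> t2 then g y else k2 y"]
      continuous_on_subset[OF assms(1)] continuous_on_subset[OF c2] assms(4,5) by auto
qed

lemma key: assumes "p \<in> E" "e > 0"
  shows "\<exists>d>0. \<forall>a b. a \<in> E \<longrightarrow> b \<in> E \<longrightarrow> a < b \<longrightarrow> \<bar>a - p\<bar> < d \<longrightarrow> \<bar>b - p\<bar> < d
           \<longrightarrow> 3 * e \<in> Rs a b"
proof -
  obtain gp where gp: "gp \<in> G" "gp p = f p" using pt assms by blast
  have "isCont f p" using fC cont_iff by blast
  then obtain d1 where d1: "d1 > 0" "\<And>y. \<bar>y - p\<bar> < d1 \<Longrightarrow> \<bar>f y - f p\<bar> < e"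
    using isCont_eps assms(2) by metis
  have "isCont gp p" using G_cont[OF gp(1)] cont_iff by blast
  then obtain d2 where d2: "d2 > 0" "\<And>y. \<bar>y - p\<bar> < d2 \<Longrightarrow> \<bar>gp y - gp p\<bar> < e"
    using isCont_eps assms(2) by metis
  define d where "d = min d1 d2"
  have "\<forall>a b. a \<in> E \<longrightarrow> b \<in> E \<longrightarrow> a < b \<longrightarrow> \<bar>a - p\<bar> < d \<longrightarrow> \<bar>b - p\<bar> < d
           \<longrightarrow> 3 * e \<in> Rs a b"
  proof (intro allI impI)
    fix a b assume ab: "a \<in> E" "b \<in> E" "a < b" "\<bar>a - p\<bar> < d" "\<bar>b - p\<bar> < d"
    obtain ga where ga: "ga \<in> G" "ga a = f a" using pt ab by blast
    obtain gb where gb: "gb \<in> G" "gb b = f b" using pt ab by blast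
    have "isCont ga a" using G_cont[OF ga(1)] cont_iff by blast
    then obtain dA where dA: "dA > 0" "\<And>y. \<bar>y - a\<bar> < dA \<Longrightarrow> \<bar>ga y - ga a\<bar> < e"
      using isCont_eps assms(2) by metis
    have "isCont gb b" using G_cont[OF gb(1)] cont_iff by blast
    then obtain dB where dB: "dB > 0" "\<And>y. \<bar>y - b\<bar> < dB \<Longrightarrow> \<bar>gb y - gb b\<bar> < e"
      using isCont_eps assms(2) by metis
    define t1 where "t1 = min (a + dA/2) ((a+b)/2)"
    define t2 where "t2 = max (b - dB/2) ((a+b)/2)"
    have t: "a < t1" "t1 \<le> t2" "t2 < b" using ab dA dB unfolding t1_def t2_def by auto
    obtain c1 where c1: "c1 \<in> G" "c1 a = ga a" "c1 t1 = gp t1"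
      using connI[OF ga(1) gp(1), of a t1] t by auto
    obtain c2 where c2: "c2 \<in> G" "c2 t2 = gp t2" "c2 b = gb b"
      using connI[OF gp(1) gb(1), of t2 b] t by auto
    define k1 where "k1 = clamp ga gp c1"
    define k2 where "k2 = clamp gb gp c2"
    define k where "k = (\<lambda>y. if y \<le> t1 then k1 y else if y \<le> t2 then gp y else k2 y)"
    have k1t: "k1 t1 = gp t1" unfolding k1_def by (rule clamp_U[of c1 t1 gp ga, OF c1(3)])
    have k2t: "k2 t2 = gp t2" unfolding k2_def by (rule clamp_U[of c2 t2 gp gb, OF c2(2)])
    have k1a: "k1 a = f a" unfolding k1_def using clamp_L[of c1 a ga gp] c1 ga by simp
    have k2b: "k2 b = f b" unfolding k2_def using clamp_L[of c2 b gb gp] c2 gb by simp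
    have ck: "continuous_on UNIV k" unfolding k_def k1_def k2_def
      by (rule pasting) (use G_cont ga gp gb c1 c2 t k1t k2t k1_def k2_def
          in \<open>auto intro!: clamp_cont\<close>)
    have pk: "\<forall>y. \<exists>g\<in>G. k y = g y"
    proof
      fix y
      show "\<exists>g\<in>G. k y = g y"
        unfolding k_def k1_def k2_def
        using clamp_val[of ga gp c1 y] clamp_val[of gb gp c2 y] ga gb gp c1 c2 by auto
    qed
    have kG: "k \<in> G" using adm_G ck pk unfolding adm_def by blast
    have ka: "k a = f a" using k1a t unfolding k_def by simp
    have kb: "k b = f b" using k2b t unfolding k_def by simp
    have bnd: "\<forall>y\<in>{a..b}. \<bar>k y - f a\<bar> \<le> 3 * e"
    proof
      fix y assume y: "y \<in> {a..b}"
      have yp: "\<bar>y - p\<bar> < d1" "\<bar>y - p\<bar> < d2" using y ab unfolding d_def by auto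
      have fa: "\<bar>f a - f p\<bar> < e" using d1(2) ab unfolding d_def by auto
      have fb: "\<bar>f b - f p\<bar> < e" using d1(2) ab unfolding d_def by auto
      have gpy: "\<bar>gp y - f p\<bar> < e" using d2(2)[OF yp(2)] gp by simp
      show "\<bar>k y - f a\<bar> \<le> 3 * e"
      proof (cases "y \<le> t1")
        case True
        have "\<bar>y - a\<bar> < dA" using True y t unfolding t1_def by auto
        hence gay: "\<bar>ga y - f a\<bar> < e" using dA(2) ga by auto
        have "k y = k1 y" using True unfolding k_def by simp
        moreover have "min (ga y) (gp y) \<le> k1 y \<and> k1 y \<le> max (ga y) (gp y)"
          unfolding k1_def by (rule clamp_bnd)
        ultimately show ?thesis using gay gpy fa by (auto simp: abs_if min_def max_def split: if_splits)
      next
        case False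
        show ?thesis
        proof (cases "y \<le> t2")
          case True
          then show ?thesis using False gpy fa unfolding k_def by auto
        next
          case False2: False
          have "\<bar>y - b\<bar> < dB" using False2 y t unfolding t2_def by auto
          hence gby: "\<bar>gb y - f b\<bar> < e" using dB(2) gb by auto
          have "k y = k2 y" using False False2 unfolding k_def by simp
          moreover have "min (gb y) (gp y) \<le> k2 y \<and> k2 y \<le> max (gb y) (gp y)"
            unfolding k2_def by (rule clamp_bnd)
          ultimately show ?thesis using gby gpy fa fb
            by (auto simp: abs_if min_def max_def split: if_splits)
        qed
      qed
    qed
    show "3 * e \<in> Rs a b" unfolding Rs_def Q_def using kG ka kb bnd by blast
  qed
  moreover have "d > 0" using d1 d2 unfolding d_def by auto
  ultimately show ?thesis by blast
qed

end

context sfam begin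

definition Al :: "real \<Rightarrow> real set" where "Al x = E \<inter> {..x}"
definition Bl :: "real \<Rightarrow> real set" where "Bl x = E \<inter> {x..}"
definition T :: "real \<Rightarrow> real \<Rightarrow> real" where "T a = (SOME g. g \<in> G \<and> g a = f a)"
definition g0 :: "real \<Rightarrow> real" where "g0 = (SOME g. g \<in> G)"
definition phi :: "real \<Rightarrow> real \<Rightarrow> real" where
  "phi x = (if Al x \<noteq> {} \<and> Bl x \<noteq> {} then Kf (Sup (Al x)) (Inf (Bl x))
            else if Al x \<noteq> {} then T (Sup (Al x))
            else if Bl x \<noteq> {} then T (Inf (Bl x)) else g0)"
definition hh :: "real \<Rightarrow> real" where "hh x = (if x \<in> E then f x else phi x x)"

lemma T: "a \<in> E \<Longrightarrow> T a \<in> G \<and> T a a = f a"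
  unfolding T_def using pt by (metis (mono_tags, lifting) someI_ex)

lemma g0: "g0 \<in> G" unfolding g0_def using ne by (simp add: some_in_eq)

lemma Al_sup: assumes "Al x \<noteq> {}"
  shows "Sup (Al x) \<in> E" "Sup (Al x) \<le> x" "\<And>y. y \<in> E \<Longrightarrow> y \<le> x \<Longrightarrow> y \<le> Sup (Al x)"
proof -
  have cl: "closed (Al x)" unfolding Al_def using cE by (simp add: closed_Int)
  have bd: "bdd_above (Al x)" unfolding Al_def by (rule bdd_aboveI[of _ x]) auto
  have "Sup (Al x) \<in> Al x" using closed_contains_Sup[OF assms bd cl] .
  thus "Sup (Al x) \<in> E" "Sup (Al x) \<le> x" unfolding Al_def by auto
  fix y assume "y \<in> E" "y \<le> x"
  thus "y \<le> Sup (Al x)" using cSup_upper[OF _ bd] unfolding Al_def by auto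
qed

lemma Bl_inf: assumes "Bl x \<noteq> {}"
  shows "Inf (Bl x) \<in> E" "x \<le> Inf (Bl x)" "\<And>y. y \<in> E \<Longrightarrow> x \<le> y \<Longrightarrow> Inf (Bl x) \<le> y"
proof -
  have cl: "closed (Bl x)" unfolding Bl_def using cE by (simp add: closed_Int)
  have bd: "bdd_below (Bl x)" unfolding Bl_def by (rule bdd_belowI[of _ x]) auto
  have "Inf (Bl x) \<in> Bl x" using closed_contains_Inf[OF assms bd cl] .
  thus "Inf (Bl x) \<in> E" "x \<le> Inf (Bl x)" unfolding Bl_def by auto
  fix y assume "y \<in> E" "x \<le> y"
  thus "Inf (Bl x) \<le> y" using cInf_lower[OF _ bd] unfolding Bl_def by auto
qed

lemma phi_G: assumes "x \<notin> E" shows "phi x \<in> G"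
proof -
  { assume A: "Al x \<noteq> {}" and B: "Bl x \<noteq> {}"
    have "Sup (Al x) < x" using Al_sup[OF A] assms by (metis order_le_less)
    moreover have "x < Inf (Bl x)" using Bl_inf[OF B] assms by (metis order_le_less)
    ultimately have "Kf (Sup (Al x)) (Inf (Bl x)) \<in> G"
      using Kf(1) Al_sup[OF A] Bl_inf[OF B] by auto }
  thus ?thesis unfolding phi_def using T Al_sup Bl_inf g0 by auto
qed

lemma phi_same: assumes "x \<le> y" "E \<inter> {x..y} = {}" shows "phi x = phi y"
proof -
  have "Al x = Al y" unfolding Al_def using assms
    by (auto simp: set_eq_iff) (meson atLeastAtMost_iff disjoint_iff linorder_le_cases)
  moreover have "Bl x = Bl y" unfolding Bl_def using assms
    by (auto simp: set_eq_iff)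
  ultimately show ?thesis unfolding phi_def by simp
qed

lemma phi_left: assumes "p \<in> E" "p < y" "E \<inter> {p<..y} = {}" shows "phi y p = f p"
proof -
  have A: "Al y \<noteq> {}" unfolding Al_def using assms by auto
  have s: "Sup (Al y) = p"
  proof (rule antisym)
    show "p \<le> Sup (Al y)" using Al_sup(3)[OF A] assms by auto
    have "Sup (Al y) \<in> E" "Sup (Al y) \<le> y" using Al_sup[OF A] by auto
    thus "Sup (Al y) \<le> p" using assms by (metis disjoint_iff greaterThanAtMost_iff not_le)
  qed
  have yE: "y \<notin> E" using assms by auto
  show ?thesis
  proof (cases "Bl y = {}")
    case True thus ?thesis unfolding phi_def using A s T assms by auto
  next
    case False
    have "y < Inf (Bl y)" using Bl_inf[OF False] yE by (metis order_le_less)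
    thus ?thesis unfolding phi_def using A s False Kf(2) assms Bl_inf[OF False] by auto
  qed
qed

lemma phi_right: assumes "p \<in> E" "y < p" "E \<inter> {y..<p} = {}" shows "phi y p = f p"
proof -
  have B: "Bl y \<noteq> {}" unfolding Bl_def using assms by auto
  have s: "Inf (Bl y) = p"
  proof (rule antisym)
    show "Inf (Bl y) \<le> p" using Bl_inf(3)[OF B] assms by auto
    have "Inf (Bl y) \<in> E" "y \<le> Inf (Bl y)" using Bl_inf[OF B] by auto
    thus "p \<le> Inf (Bl y)" using assms by (metis disjoint_iff atLeastLessThan_iff not_le)
  qed
  have yE: "y \<notin> E" using assms by auto
  show ?thesis
  proof (cases "Al y = {}")
    case True thus ?thesis unfolding phi_def using B s T assms by auto
  next
    case False
    have "Sup (Al y) < y" using Al_sup[OF False] yE by (metis order_le_less)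
    thus ?thesis unfolding phi_def using B s False Kf(3) assms Al_sup[OF False] by auto
  qed
qed

end

context sfam begin

lemma cont_out: assumes "x \<notin> E" shows "isCont hh x"
proof -
  have "open (- E)" using cE by (simp add: open_Compl)
  then obtain r where r: "r > 0" "\<And>y. dist y x < r \<Longrightarrow> y \<in> - E"
    using assms unfolding open_dist by auto
  have loc: "hh y = phi x y" if "\<bar>y - x\<bar> < r" for y
  proof -
    have yE: "y \<notin> E" using r(2)[of y] that by (auto simp: dist_real_def)
    have "E \<inter> {min x y..max x y} = {}"
    proof (rule ccontr)
      assume "E \<inter> {min x y..max x y} \<noteq> {}"
      then obtain z where "z \<in> E" "min x y \<le> z" "z \<le> max x y" by auto
      hence "\<bar>z - x\<bar> < r" using that by (auto simp: min_def max_def split: if_splits)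
      thus False using r(2)[of z] \<open>z \<in> E\<close> by (auto simp: dist_real_def)
    qed
    hence "phi (min x y) = phi (max x y)" by (intro phi_same) auto
    hence "phi y = phi x" by (auto simp: min_def max_def split: if_splits)
    thus ?thesis unfolding hh_def using yE by simp
  qed
  have "isCont (phi x) x" using G_cont[OF phi_G[OF assms]] cont_iff by blast
  show ?thesis unfolding isCont_eps
  proof (intro allI impI)
    fix e :: real assume "e > 0"
    then obtain d1 where d1: "d1 > 0" "\<And>y. \<bar>y - x\<bar> < d1 \<Longrightarrow> \<bar>phi x y - phi x x\<bar> < e"
      using \<open>isCont (phi x) x\<close> unfolding isCont_eps by metis
    show "\<exists>d>0. \<forall>y. \<bar>y - x\<bar> < d \<longrightarrow> \<bar>hh y - hh x\<bar> < e"
      using d1 r loc[of x] loc by (intro exI[of _ "min r d1"]) auto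
  qed
qed

lemma right_side: assumes "p \<in> E" "\<epsilon> > 0"
  shows "\<exists>\<delta>>0. \<forall>y. p < y \<longrightarrow> y < p + \<delta> \<longrightarrow> \<bar>hh y - f p\<bar> < \<epsilon>"
proof -
  define e' where "e' = \<epsilon> / 8"
  have e': "e' > 0" using assms unfolding e'_def by auto
  obtain d0 where d0: "d0 > 0" "\<And>a b. a \<in> E \<Longrightarrow> b \<in> E \<Longrightarrow> a < b \<Longrightarrow> \<bar>a - p\<bar> < d0 \<Longrightarrow> \<bar>b - p\<bar> < d0
           \<Longrightarrow> 3 * e' \<in> Rs a b" using key[OF assms(1) e'] by metis
  have "isCont f p" using fC cont_iff by blast
  then obtain df where df: "df > 0" "\<And>y. \<bar>y - p\<bar> < df \<Longrightarrow> \<bar>f y - f p\<bar> < e'"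
    using isCont_eps e' by metis
  define D where "D = min d0 (min df e')"
  have D: "D > 0" "D \<le> d0" "D \<le> df" "D \<le> e'" using d0 df e' unfolding D_def by auto
  show ?thesis
  proof (cases "\<exists>e\<in>E. p < e \<and> e < p + D")
    case True
    then obtain e where e: "e \<in> E" "p < e" "e < p + D" by blast
    have "\<forall>y. p < y \<longrightarrow> y < p + (e - p) \<longrightarrow> \<bar>hh y - f p\<bar> < \<epsilon>"
    proof (intro allI impI)
      fix y assume y: "p < y" "y < p + (e - p)"
      show "\<bar>hh y - f p\<bar> < \<epsilon>"
      proof (cases "y \<in> E")
        case True
        thus ?thesis unfolding hh_def using df(2)[of y] y e D unfolding e'_def by auto
      next
        case False
        have A: "Al y \<noteq> {}" unfolding Al_def using assms y by auto
        have B: "Bl y \<noteq> {}" unfolding Bl_def using e y by auto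
        define a where "a = Sup (Al y)"
        define b where "b = Inf (Bl y)"
        have a: "a \<in> E" "p \<le> a" "a < y" using Al_sup[OF A] assms y False unfolding a_def
          by (auto, metis order_le_less)
        have b: "b \<in> E" "b \<le> e" "y < b" using Bl_inf[OF B] e y False unfolding b_def
          by (auto, metis order_le_less)
        have ph: "phi y = Kf a b" unfolding phi_def a_def b_def using A B by simp
        have "3 * e' \<in> Rs a b" using d0(2)[OF a(1) b(1)] a b e D by auto
        hence "\<bar>Kf a b y - f a\<bar> \<le> 3 * e' + (b - a)" using Kf(4)[OF a(1) b(1)] a b by auto
        moreover have "\<bar>f a - f p\<bar> < e'" using df(2)[of a] a y e D by auto
        moreover have "b - a < \<epsilon> / 8" using a b e D y unfolding e'_def by auto
        ultimately have "\<bar>Kf a b y - f p\<bar> < \<epsilon>" unfolding e'_def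
          by (simp only: abs_le_iff abs_less_iff) linarith
        thus ?thesis unfolding hh_def using False ph by simp
      qed
    qed
    thus ?thesis using e by (intro exI[of _ "e - p"]) auto
  next
    case False
    define y0 where "y0 = p + D / 2"
    have emp: "E \<inter> {p<..y0} = {}" using False D unfolding y0_def by force
    have py0: "phi y0 p = f p" using phi_left[OF assms(1) _ emp] D unfolding y0_def by auto
    have "y0 \<notin> E" using emp D unfolding y0_def by auto
    have "isCont (phi y0) p" using G_cont[OF phi_G[OF \<open>y0 \<notin> E\<close>]] cont_iff by blast
    then obtain dp where dp: "dp > 0" "\<And>y. \<bar>y - p\<bar> < dp \<Longrightarrow> \<bar>phi y0 y - phi y0 p\<bar> < \<epsilon>"
      using isCont_eps assms(2) by metis
    have "\<forall>y. p < y \<longrightarrow> y < p + min (D/2) dp \<longrightarrow> \<bar>hh y - f p\<bar> < \<epsilon>"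
    proof (intro allI impI)
      fix y assume y: "p < y" "y < p + min (D/2) dp"
      have yE: "y \<notin> E" using emp y unfolding y0_def by auto
      have "E \<inter> {y..y0} = {}" using emp y by auto
      hence "phi y = phi y0" using phi_same[of y y0] y unfolding y0_def by auto
      thus "\<bar>hh y - f p\<bar> < \<epsilon>" unfolding hh_def using yE dp(2)[of y] y py0 by auto
    qed
    thus ?thesis using D dp by (intro exI[of _ "min (D/2) dp"]) auto
  qed
qed

lemma left_side: assumes "p \<in> E" "\<epsilon> > 0"
  shows "\<exists>\<delta>>0. \<forall>y. y < p \<longrightarrow> p - \<delta> < y \<longrightarrow> \<bar>hh y - f p\<bar> < \<epsilon>"
proof -
  define e' where "e' = \<epsilon> / 8"
  have e': "e' > 0" using assms unfolding e'_def by auto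
  obtain d0 where d0: "d0 > 0" "\<And>a b. a \<in> E \<Longrightarrow> b \<in> E \<Longrightarrow> a < b \<Longrightarrow> \<bar>a - p\<bar> < d0 \<Longrightarrow> \<bar>b - p\<bar> < d0
           \<Longrightarrow> 3 * e' \<in> Rs a b" using key[OF assms(1) e'] by metis
  have "isCont f p" using fC cont_iff by blast
  then obtain df where df: "df > 0" "\<And>y. \<bar>y - p\<bar> < df \<Longrightarrow> \<bar>f y - f p\<bar> < e'"
    using isCont_eps e' by metis
  define D where "D = min d0 (min df e')"
  have D: "D > 0" "D \<le> d0" "D \<le> df" "D \<le> e'" using d0 df e' unfolding D_def by auto
  show ?thesis
  proof (cases "\<exists>e\<in>E. e < p \<and> p - D < e")
    case True
    then obtain e where e: "e \<in> E" "e < p" "p - D < e" by blast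
    have "\<forall>y. y < p \<longrightarrow> p - (p - e) < y \<longrightarrow> \<bar>hh y - f p\<bar> < \<epsilon>"
    proof (intro allI impI)
      fix y assume y: "y < p" "p - (p - e) < y"
      show "\<bar>hh y - f p\<bar> < \<epsilon>"
      proof (cases "y \<in> E")
        case True
        thus ?thesis unfolding hh_def using df(2)[of y] y e D unfolding e'_def by auto
      next
        case False
        have A: "Al y \<noteq> {}" unfolding Al_def using e y by auto
        have B: "Bl y \<noteq> {}" unfolding Bl_def using assms y by auto
        define a where "a = Sup (Al y)"
        define b where "b = Inf (Bl y)"
        have a: "a \<in> E" "e \<le> a" "a < y" using Al_sup[OF A] e y False unfolding a_def
          by (auto, metis order_le_less)
        have b: "b \<in> E" "b \<le> p" "y < b" using Bl_inf[OF B] assms y False unfolding b_def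
          by (auto, metis order_le_less)
        have ph: "phi y = Kf a b" unfolding phi_def a_def b_def using A B by simp
        have "3 * e' \<in> Rs a b" using d0(2)[OF a(1) b(1)] a b e D y by auto
        hence "\<bar>Kf a b y - f a\<bar> \<le> 3 * e' + (b - a)" using Kf(4)[OF a(1) b(1)] a b by auto
        moreover have "\<bar>f a - f p\<bar> < e'" using df(2)[of a] a b y e D by auto
        moreover have "b - a < \<epsilon> / 8" using a b e D y unfolding e'_def by auto
        ultimately have "\<bar>Kf a b y - f p\<bar> < \<epsilon>" unfolding e'_def
          by (simp only: abs_le_iff abs_less_iff) linarith
        thus ?thesis unfolding hh_def using False ph by simp
      qed
    qed
    thus ?thesis using e by (intro exI[of _ "p - e"]) auto
  next
    case False
    define y0 where "y0 = p - D / 2"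
    have emp: "E \<inter> {y0..<p} = {}" using False D unfolding y0_def by force
    have py0: "phi y0 p = f p" using phi_right[OF assms(1) _ emp] D unfolding y0_def by auto
    have "y0 \<notin> E" using emp D unfolding y0_def by auto
    have "isCont (phi y0) p" using G_cont[OF phi_G[OF \<open>y0 \<notin> E\<close>]] cont_iff by blast
    then obtain dp where dp: "dp > 0" "\<And>y. \<bar>y - p\<bar> < dp \<Longrightarrow> \<bar>phi y0 y - phi y0 p\<bar> < \<epsilon>"
      using isCont_eps assms(2) by metis
    have "\<forall>y. y < p \<longrightarrow> p - min (D/2) dp < y \<longrightarrow> \<bar>hh y - f p\<bar> < \<epsilon>"
    proof (intro allI impI)
      fix y assume y: "y < p" "p - min (D/2) dp < y"
      have yE: "y \<notin> E" using emp y unfolding y0_def by auto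
      have "E \<inter> {y0..y} = {}" using emp y by auto
      hence "phi y0 = phi y" using phi_same[of y0 y] y unfolding y0_def by auto
      thus "\<bar>hh y - f p\<bar> < \<epsilon>" unfolding hh_def using yE dp(2)[of y] y py0 by auto
    qed
    thus ?thesis using D dp by (intro exI[of _ "min (D/2) dp"]) auto
  qed
qed

lemma cont_in: assumes "p \<in> E" shows "isCont hh p"
  unfolding isCont_eps
proof (intro allI impI)
  fix e :: real assume "e > 0"
  obtain dr where dr: "dr > 0" "\<forall>y. p < y \<longrightarrow> y < p + dr \<longrightarrow> \<bar>hh y - f p\<bar> < e"
    using right_side[OF assms \<open>e > 0\<close>] by blast
  obtain dl where dl: "dl > 0" "\<forall>y. y < p \<longrightarrow> p - dl < y \<longrightarrow> \<bar>hh y - f p\<bar> < e"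
    using left_side[OF assms \<open>e > 0\<close>] by blast
  have hp: "hh p = f p" unfolding hh_def using assms by simp
  have "\<forall>y. \<bar>y - p\<bar> < min dr dl \<longrightarrow> \<bar>hh y - hh p\<bar> < e"
  proof (intro allI impI)
    fix y assume "\<bar>y - p\<bar> < min dr dl"
    thus "\<bar>hh y - hh p\<bar> < e" using dr dl hp \<open>e > 0\<close>
      by (cases "y < p"; cases "p < y") auto
  qed
  thus "\<exists>d>0. \<forall>y. \<bar>y - p\<bar> < d \<longrightarrow> \<bar>hh y - hh p\<bar> < e" using dr dl by (intro exI[of _ "min dr dl"]) auto
qed

lemma main: "\<exists>g\<in>G. \<forall>x\<in>E. f x = g x"
proof -
  have c: "continuous_on UNIV hh" using cont_iff cont_in cont_out by blast
  have "\<forall>x. \<exists>g\<in>G. hh x = g x"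
  proof
    fix x show "\<exists>g\<in>G. hh x = g x"
      using pt phi_G unfolding hh_def by (cases "x \<in> E") (auto, metis)
  qed
  hence "hh \<in> G" using adm_G c unfolding adm_def by blast
  moreover have "\<forall>x\<in>E. f x = hh x" unfolding hh_def by simp
  ultimately show ?thesis by blast
qed

end


theorem theorem4p5:
  fixes G :: "(real \<Rightarrow> real) set"
  assumes "G \<subseteq> Cont" and "G \<noteq> {}"
  shows "K_fam G \<subseteq> {CL \<inter> Pow X | X. X \<subseteq> (UNIV :: real set)}
         \<longleftrightarrow> complete_family G \<and> connected_family G"
proof
  assume H: "K_fam G \<subseteq> {CL \<inter> Pow X | X. X \<subseteq> (UNIV :: real set)}"
  have Eh: "\<exists>X. E_fam G F = CL \<inter> Pow X" if "F \<subseteq> Cont" for F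
  proof -
    have "E_fam G F \<in> K_fam G" unfolding K_fam_def using that by blast
    thus ?thesis using H by blast
  qed
  have sing: "{x} \<in> E_fam G {h}" if "h \<in> Cont" "g \<in> G" "g x = h x" for h g x
  proof -
    have "(h, {x}) \<in> R_rel G" unfolding R_rel_def CL_def using that by (auto intro!: bexI[of _ g])
    thus ?thesis unfolding E_fam_def CL_def by simp
  qed
  have comp: "complete_family G"
    unfolding complete_family_def
  proof (intro ballI impI)
    fix g assume g: "g \<in> Cont" "{(x, g x) |x. True} \<subseteq> graph_union G"
    obtain X where X: "E_fam G {g} = CL \<inter> Pow X" using Eh g(1) by blast
    have "x \<in> X" for x
    proof -
      have "(x, g x) \<in> graph_union G" using g(2) by blast
      then obtain g' where "g' \<in> G" "g' x = g x" unfolding graph_union_def by auto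
      hence "{x} \<in> E_fam G {g}" using sing g(1) by blast
      thus ?thesis using X by auto
    qed
    hence "UNIV \<in> E_fam G {g}" using X unfolding CL_def by auto
    then obtain g' where "g' \<in> G" "\<forall>x. g x = g' x"
      unfolding E_fam_def R_rel_def by auto
    moreover hence "g = g'" by auto
    ultimately show "g \<in> G" by simp
  qed
  have con: "connected_family G"
    unfolding connected_family_def
  proof (intro ballI allI impI)
    fix f g x y assume fg: "f \<in> G" "g \<in> G" and xy: "(x::real) \<noteq> y"
    define h0 where "h0 = (\<lambda>t. f x + (t - x) * ((g y - f x) / (y - x)))"
    have h0C: "h0 \<in> Cont" unfolding h0_def Cont_def mem_Collect_eq
      by (intro continuous_intros)
    have h0x: "h0 x = f x" unfolding h0_def by simp
    have h0y: "h0 y = g y" proof -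
      have "y - x \<noteq> 0" using xy by simp
      thus ?thesis unfolding h0_def by (simp add: field_simps)
    qed
    obtain X where X: "E_fam G {h0} = CL \<inter> Pow X" using Eh h0C by blast
    have "{x} \<in> E_fam G {h0}" using sing[OF h0C fg(1)] h0x by simp
    moreover have "{y} \<in> E_fam G {h0}" using sing[OF h0C fg(2)] h0y by simp
    ultimately have "x \<in> X" "y \<in> X" using X by auto
    hence "{x, y} \<in> E_fam G {h0}" using X unfolding CL_def by auto
    then obtain h where "h \<in> G" "\<forall>z\<in>{x,y}. h0 z = h z"
      unfolding E_fam_def R_rel_def by auto
    thus "\<exists>h\<in>G. h x = f x \<and> h y = g y" using h0x h0y by auto
  qed
  show "complete_family G \<and> connected_family G" using comp con by blast
next
  assume H: "complete_family G \<and> connected_family G"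
  have fG: "fam G" unfolding fam_def using assms H by blast
  interpret fam G by (rule fG)
  show "K_fam G \<subseteq> {CL \<inter> Pow X | X. X \<subseteq> (UNIV :: real set)}"
  proof
    fix K assume "K \<in> K_fam G"
    then obtain F where F: "F \<subseteq> Cont" "K = E_fam G F" unfolding K_fam_def by blast
    define X where "X = {x. \<forall>f\<in>F. \<exists>g\<in>G. f x = g x}"
    have "E_fam G F = CL \<inter> Pow X"
    proof
      show "E_fam G F \<subseteq> CL \<inter> Pow X"
      proof
        fix E assume E: "E \<in> E_fam G F"
        have "E \<subseteq> X"
        proof
          fix x assume x: "x \<in> E"
          have "\<exists>g\<in>G. f x = g x" if "f \<in> F" for f
          proof -
            have "(f, E) \<in> R_rel G" using E that unfolding E_fam_def by blast
            then obtain g where "g \<in> G" "\<forall>z\<in>E. f z = g z" unfolding R_rel_def by blast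
            thus ?thesis using x by blast
          qed
          thus "x \<in> X" unfolding X_def by blast
        qed
        moreover have "E \<in> CL" using E unfolding E_fam_def by blast
        ultimately show "E \<in> CL \<inter> Pow X" by blast
      qed
      show "CL \<inter> Pow X \<subseteq> E_fam G F"
      proof
        fix E assume E: "E \<in> CL \<inter> Pow X"
        have "(f, E) \<in> R_rel G" if fF: "f \<in> F" for f
        proof -
          have fC: "f \<in> Cont" using F fF by blast
          have ptE: "\<forall>x\<in>E. \<exists>g\<in>G. g x = f x"
          proof
            fix x assume "x \<in> E"
            hence "x \<in> X" using E by blast
            then obtain g where "g \<in> G" "f x = g x" using fF unfolding X_def by blast
            thus "\<exists>g\<in>G. g x = f x" by (metis (no_types))
          qed
          have fc: "continuous_on UNIV f" using fC unfolding Cont_def by simp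
          have ce: "closed E" using E unfolding CL_def by simp
          have sf: "sfam G f E"
            by (rule sfam.intro[OF fam_axioms], rule sfam_axioms.intro[OF fc ce ptE])
          have mn: "\<exists>g\<in>G. \<forall>x\<in>E. f x = g x" by (rule sfam.main[OF sf])
          have "E \<in> CL" using E by blast
          thus ?thesis unfolding R_rel_def using mn fC by simp
        qed
        thus "E \<in> E_fam G F" using E unfolding E_fam_def by blast
      qed
    qed
    thus "K \<in> {CL \<inter> Pow X | X. X \<subseteq> (UNIV :: real set)}" using F by blast
  qed
qed

end
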